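(* Let $A$ be a unital $\Bbbk$-algebra which is a domain, and for $k=1,\dots,m$ let $\varphi_k$ be algebra automorphisms and $\partial_k$ locally nilpotent skew derivations of $A$ with respect to $\varphi_k$, such that $\partial_\ell\circ\varphi_k=q_{k\ell}\,\varphi_k\circ\partial_\ell$ for all $1\le k,\ell\le m$, where $\widehat{\mathbf q}=(q_{k\ell})$ is an $m\times m$ matrix over $\Bbbk^\times$ and each $q_{kk}$ is not a root of unity. Let $\varepsilon:A\to\Bbbk$ be an algebra homomorphism with $\varepsilon\circ\varphi_k=\varepsilon$ for all $k$. Let $A_{\mathbf q}$ be the $\Bbbk$-algebra generated by $t_1,\dots,t_m$ subject to $t_\ell t_k=q_{k\ell}t_kt_\ell$ for $k<\ell$. Then $$\Phi(x)=\sum_{a\in\mathbb Z_{\ge0}^m}\varepsilon\big(\partial_m^{(a_m)}\cdots\partial_1^{(a_1)}(x)\big)\,t_1^{a_1}\cdots t_m^{a_m}$$ (a finite sum) defines an algebra homomorphism $\Phi:A\to A_{\mathbf q}$.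
   Context: A skew derivation with respect to $\varphi$ is a linear map $\partial$ with $\partial(ab)=\partial(a)b+\varphi(a)\partial(b)$; locally nilpotent means every element is killed by some power. Divided powers: $\partial_k^{(n)}=\frac{1}{[n]_{q_{kk}}!}\partial_k^n$ with $[n]_r!=\prod_{\ell=1}^n\frac{1-r^\ell}{1-r}$. *)

theory Defs
  imports Complex_Main
begin

definition is_algebra :: "('k::field \<Rightarrow> 'a::ring_1 \<Rightarrow> 'a) \<Rightarrow> bool" where
  "is_algebra sc \<longleftrightarrow> module sc \<and>
     (\<forall>c x y. sc c (x * y) = sc c x * y \<and> sc c (x * y) = x * sc c y)"

definition is_linear_map :: "('k::field \<Rightarrow> 'a::ring_1 \<Rightarrow> 'a) \<Rightarrow> ('a \<Rightarrow> 'a) \<Rightarrow> bool" where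
  "is_linear_map sc f \<longleftrightarrow> (\<forall>x y. f (x + y) = f x + f y) \<and> (\<forall>c x. f (sc c x) = sc c (f x))"

definition is_algebra_automorphism :: "('k::field \<Rightarrow> 'a::ring_1 \<Rightarrow> 'a) \<Rightarrow> ('a \<Rightarrow> 'a) \<Rightarrow> bool" where
  "is_algebra_automorphism sc f \<longleftrightarrow> is_linear_map sc f \<and> (\<forall>x y. f (x * y) = f x * f y)
     \<and> f 1 = 1 \<and> bij f"

definition is_skew_derivation :: "('k::field \<Rightarrow> 'a::ring_1 \<Rightarrow> 'a) \<Rightarrow> ('a \<Rightarrow> 'a) \<Rightarrow> ('a \<Rightarrow> 'a) \<Rightarrow> bool" where
  "is_skew_derivation sc phi d \<longleftrightarrow> is_linear_map sc d \<and>
     (\<forall>a b. d (a * b) = d a * b + phi a * d b)"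

definition locally_nilpotent :: "('a::zero \<Rightarrow> 'a) \<Rightarrow> bool" where
  "locally_nilpotent d \<longleftrightarrow> (\<forall>x. \<exists>n. (d ^^ n) x = 0)"

definition is_algebra_hom_to_field :: "('k::field \<Rightarrow> 'a::ring_1 \<Rightarrow> 'a) \<Rightarrow> ('a \<Rightarrow> 'k) \<Rightarrow> bool" where
  "is_algebra_hom_to_field sc e \<longleftrightarrow> (\<forall>x y. e (x + y) = e x + e y) \<and> (\<forall>c x. e (sc c x) = c * e x)
     \<and> (\<forall>x y. e (x * y) = e x * e y) \<and> e 1 = 1"

definition qfact :: "'k::field \<Rightarrow> nat \<Rightarrow> 'k" where
  "qfact r n = (\<Prod>l = 1..n. (1 - r ^ l) / (1 - r))"

definition divided_power :: "('k::field \<Rightarrow> 'a::ring_1 \<Rightarrow> 'a) \<Rightarrow> 'k \<Rightarrow> ('a \<Rightarrow> 'a) \<Rightarrow> nat \<Rightarrow> 'a \<Rightarrow> 'a" where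
  "divided_power sc r d n x = sc (inverse (qfact r n)) ((d ^^ n) x)"

text \<open>\<open>iter_divided sc q D m a x\<close> = D_m^(a_m) ( ... (D_1^(a_1) x)); D_1 is applied first.\<close>
definition iter_divided :: "('k::field \<Rightarrow> 'a::ring_1 \<Rightarrow> 'a) \<Rightarrow> (nat \<Rightarrow> nat \<Rightarrow> 'k) \<Rightarrow> (nat \<Rightarrow> 'a \<Rightarrow> 'a)
     \<Rightarrow> nat \<Rightarrow> (nat \<Rightarrow> nat) \<Rightarrow> 'a \<Rightarrow> 'a" where
  "iter_divided sc q D m a x = fold (\<lambda>k y. divided_power sc (q k k) (D k) (a k) y) [1..<Suc m] x"

text \<open>Elements of the free k-algebra k<t_1,t_2,...> are finitely supported functions
  from words (lists of generator indices) to k.\<close>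
definition fin_supp :: "(nat list \<Rightarrow> 'k::zero) \<Rightarrow> bool" where
  "fin_supp f \<longleftrightarrow> finite {w. f w \<noteq> 0}"

definition fa_add :: "(nat list \<Rightarrow> 'k::field) \<Rightarrow> (nat list \<Rightarrow> 'k) \<Rightarrow> nat list \<Rightarrow> 'k" where
  "fa_add f g = (\<lambda>w. f w + g w)"

definition fa_diff :: "(nat list \<Rightarrow> 'k::field) \<Rightarrow> (nat list \<Rightarrow> 'k) \<Rightarrow> nat list \<Rightarrow> 'k" where
  "fa_diff f g = (\<lambda>w. f w - g w)"

definition fa_scale :: "'k::field \<Rightarrow> (nat list \<Rightarrow> 'k) \<Rightarrow> nat list \<Rightarrow> 'k" where
  "fa_scale c f = (\<lambda>w. c * f w)"

definition fa_mul :: "(nat list \<Rightarrow> 'k::field) \<Rightarrow> (nat list \<Rightarrow> 'k) \<Rightarrow> nat list \<Rightarrow> 'k" where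
  "fa_mul f g = (\<lambda>w. \<Sum>i\<le>length w. f (take i w) * g (drop i w))"

definition fa_one :: "nat list \<Rightarrow> 'k::field" where
  "fa_one = (\<lambda>w. if w = [] then 1 else 0)"

definition fa_word :: "nat list \<Rightarrow> nat list \<Rightarrow> 'k::field" where
  "fa_word u = (\<lambda>w. if w = u then 1 else 0)"

definition qrel :: "(nat \<Rightarrow> nat \<Rightarrow> 'k::field) \<Rightarrow> nat \<Rightarrow> nat \<Rightarrow> nat list \<Rightarrow> 'k" where
  "qrel q k l = fa_diff (fa_word [l, k]) (fa_scale (q k l) (fa_word [k, l]))"

inductive_set qideal :: "(nat \<Rightarrow> nat \<Rightarrow> 'k::field) \<Rightarrow> nat \<Rightarrow> (nat list \<Rightarrow> 'k) set"
  for q :: "nat \<Rightarrow> nat \<Rightarrow> 'k" and m :: nat where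
  gen: "1 \<le> k \<Longrightarrow> k < l \<Longrightarrow> l \<le> m \<Longrightarrow> qrel q k l \<in> qideal q m"
| zero: "(\<lambda>w. 0) \<in> qideal q m"
| add: "f \<in> qideal q m \<Longrightarrow> g \<in> qideal q m \<Longrightarrow> fa_add f g \<in> qideal q m"
| lmul: "f \<in> qideal q m \<Longrightarrow> fin_supp g \<Longrightarrow> fa_mul g f \<in> qideal q m"
| rmul: "f \<in> qideal q m \<Longrightarrow> fin_supp g \<Longrightarrow> fa_mul f g \<in> qideal q m"

text \<open>Equality in A_q = free algebra on t_1..t_m modulo the ideal.\<close>
definition qeq :: "(nat \<Rightarrow> nat \<Rightarrow> 'k::field) \<Rightarrow> nat \<Rightarrow> (nat list \<Rightarrow> 'k) \<Rightarrow> (nat list \<Rightarrow> 'k) \<Rightarrow> bool" where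
  "qeq q m f g \<longleftrightarrow> fa_diff f g \<in> qideal q m"

text \<open>Words t_1^{a_1}...t_m^{a_m} are exactly the sorted words over {1..m};
  the exponent a_i is the number of occurrences of i.\<close>
definition Phi :: "('k::field \<Rightarrow> 'a::ring_1 \<Rightarrow> 'a) \<Rightarrow> (nat \<Rightarrow> nat \<Rightarrow> 'k) \<Rightarrow> (nat \<Rightarrow> 'a \<Rightarrow> 'a)
     \<Rightarrow> ('a \<Rightarrow> 'k) \<Rightarrow> nat \<Rightarrow> 'a \<Rightarrow> nat list \<Rightarrow> 'k" where
  "Phi sc q D e m x = (\<lambda>w. if sorted w \<and> set w \<subseteq> {1..m}
       then e (iter_divided sc q D m (count_list w) x) else 0)"

end

theory Submission imports Defs "HOL-Library.Multiset" begin

fun wo :: "nat \<Rightarrow> (nat \<Rightarrow> nat) \<Rightarrow> nat list" where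
  "wo 0 c = []"
| "wo (Suc r) c = wo r c @ replicate (c (Suc r)) (Suc r)"

lemma cnt_rep: "count_list (replicate n x) y = (if x = y then n else 0)"
  by (induction n) auto

lemma wo_set: "set (wo r c) \<subseteq> {1..r}"
  by (induction r) auto

lemma wo_sorted: "sorted (wo r c)"
proof (induction r)
  case (Suc r)
  then show ?case using wo_set[of r c] by (auto simp: sorted_append)
qed simp

lemma wo_cnt: "count_list (wo r c) k = (if k \<in> {1..r} then c k else 0)"
  by (induction r) (auto simp: cnt_rep)

lemma wo_of_sorted: "sorted w \<Longrightarrow> set w \<subseteq> {1..r} \<Longrightarrow> wo r (count_list w) = w"
proof -
  assume a: "sorted w" "set w \<subseteq> {1..r}"
  have "mset (wo r (count_list w)) = mset w"
  proof (rule multiset_eqI)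
    fix k
    show "count (mset (wo r (count_list w))) k = count (mset w) k"
    proof (cases "k \<in> {1..r}")
      case False then have "k \<notin> set w" using a(2) by auto
      then show ?thesis using False by (simp add: count_mset wo_cnt)
    qed (simp add: count_mset wo_cnt)
  qed
  then have "sort w = wo r (count_list w)" by (intro properties_for_sort wo_sorted)
  then show ?thesis using sorted_sort_id[OF a(1)] by simp
qed
context fixes q :: "nat \<Rightarrow> nat \<Rightarrow> 'k::field" and m :: nat begin

lemma fa_word_word: "fa_mul (fa_word u) (fa_word v) = fa_word (u @ v)"
proof
  fix w
  have e: "(take i w = u \<and> drop i w = v) \<longleftrightarrow> (i = length u \<and> w = u @ v)" if "i \<le> length w" for i
  proof
    assume h: "take i w = u \<and> drop i w = v"
    then have "w = u @ v" using append_take_drop_id[of i w] by simp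
    moreover have "i = length u" using h that by auto
    ultimately show "i = length u \<and> w = u @ v" by simp
  qed simp
  have "fa_mul (fa_word u) (fa_word v) w = (\<Sum>i\<le>length w. if i = length u \<and> w = u @ v then 1 else 0)"
    unfolding fa_mul_def fa_word_def by (rule sum.cong) (use e in auto)
  also have "\<dots> = fa_word (u @ v) w"
    unfolding fa_word_def by (cases "w = u @ v") (auto simp: sum.delta)
  finally show "fa_mul (fa_word u) (fa_word v) w = fa_word (u @ v) w" .
qed

lemma fa_mul_lin_left: "fa_mul (\<lambda>w. a * f w + b * g w) h = (\<lambda>w. a * fa_mul f h w + b * fa_mul g h w)"
  unfolding fa_mul_def by (auto simp: fun_eq_iff sum_distrib_left sum.distrib algebra_simps)

lemma fa_mul_lin_right: "fa_mul h (\<lambda>w. a * f w + b * g w) = (\<lambda>w. a * fa_mul h f w + b * fa_mul h g w)"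
  unfolding fa_mul_def by (auto simp: fun_eq_iff sum_distrib_left sum.distrib algebra_simps)

lemma fa_mul_scale_left: "fa_mul (\<lambda>w. a * f w) h = (\<lambda>w. a * fa_mul f h w)"
  unfolding fa_mul_def by (auto simp: fun_eq_iff sum_distrib_left algebra_simps)

lemma fa_mul_scale_right: "fa_mul h (\<lambda>w. a * f w) = (\<lambda>w. a * fa_mul h f w)"
  unfolding fa_mul_def by (auto simp: fun_eq_iff sum_distrib_left algebra_simps)

lemma fa_mul_sum_left: "fa_mul (\<lambda>w. \<Sum>i\<in>I. F i w) h = (\<lambda>w. \<Sum>i\<in>I. fa_mul (F i) h w)"
  unfolding fa_mul_def by (auto simp: fun_eq_iff sum_distrib_right intro: sum.swap)

lemma fa_mul_sum_right: "fa_mul h (\<lambda>w. \<Sum>i\<in>I. F i w) = (\<lambda>w. \<Sum>i\<in>I. fa_mul h (F i) w)"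
  unfolding fa_mul_def by (auto simp: fun_eq_iff sum_distrib_left intro: sum.swap)

lemma fa_expand: "finite U \<Longrightarrow> {w. f w \<noteq> 0} \<subseteq> U \<Longrightarrow> f = (\<lambda>w. \<Sum>u\<in>U. f u * fa_word u w)"
proof
  fix w assume U: "finite U" "{w. f w \<noteq> 0} \<subseteq> U"
  have "(\<Sum>u\<in>U. f u * fa_word u w) = (\<Sum>u\<in>U. if w = u then f w else 0)"
    unfolding fa_word_def by (rule sum.cong) auto
  also have "\<dots> = f w" using U by (auto simp: sum.delta)
  finally show "f w = (\<Sum>u\<in>U. f u * fa_word u w)" by simp
qed

lemma fa_mul_expand:
  assumes "finite U" "{w. f w \<noteq> 0} \<subseteq> U" "finite V" "{w. g w \<noteq> 0} \<subseteq> V"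
  shows "fa_mul f g = (\<lambda>w. \<Sum>u\<in>U. \<Sum>v\<in>V. f u * g v * fa_word (u @ v) w)"
proof -
  have "fa_mul f g = fa_mul (\<lambda>w. \<Sum>u\<in>U. f u * fa_word u w) (\<lambda>w. \<Sum>v\<in>V. g v * fa_word v w)"
    using fa_expand[OF assms(1,2)] fa_expand[OF assms(3,4)] by metis
  also have "\<dots> = (\<lambda>w. \<Sum>u\<in>U. \<Sum>v\<in>V. f u * g v * fa_word (u @ v) w)"
    by (simp add: fa_mul_sum_left fa_mul_sum_right fa_mul_scale_left fa_mul_scale_right
        fa_word_word mult.assoc)
  finally show ?thesis .
qed

abbreviation QI where "QI \<equiv> qideal q m"

lemma fin_supp_scale_one: "fin_supp (\<lambda>w. c * fa_one w)"
  unfolding fin_supp_def fa_one_def by (rule finite_subset[of _ "{[]}"]) auto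

lemma fin_supp_word: "fin_supp (fa_word u)"
  unfolding fin_supp_def fa_word_def by (rule finite_subset[of _ "{u}"]) auto

lemma fa_mul_one_left: "fa_mul fa_one f = f"
proof
  fix w
  have "fa_mul fa_one f w = (\<Sum>i\<le>length w. if i = 0 then f w else 0)"
    unfolding fa_mul_def fa_one_def by (rule sum.cong) auto
  then show "fa_mul fa_one f w = f w" by simp
qed

lemma I_scale: "f \<in> QI \<Longrightarrow> (\<lambda>w. c * f w) \<in> QI"
proof -
  assume "f \<in> QI"
  then have "fa_mul (\<lambda>w. c * fa_one w) f \<in> QI" by (rule qideal.lmul[OF _ fin_supp_scale_one])
  then show ?thesis by (simp add: fa_mul_scale_left fa_mul_one_left)
qed

lemma I_add: "f \<in> QI \<Longrightarrow> g \<in> QI \<Longrightarrow> (\<lambda>w. f w + g w) \<in> QI"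
  using qideal.add unfolding fa_add_def by auto

lemma I_zero: "(\<lambda>w. 0) \<in> QI" by (rule qideal.zero)

lemma I_sum: "(\<And>i. i \<in> A \<Longrightarrow> F i \<in> QI) \<Longrightarrow> (\<lambda>w. \<Sum>i\<in>A. F i w) \<in> QI"
proof (induction A rule: infinite_finite_induct)
  case (insert x A') then show ?case using I_add[of "F x"] by simp
qed (auto simp: I_zero)

lemma qeq_refl: "qeq q m f f"
  unfolding qeq_def fa_diff_def using I_zero by simp

lemma qeq_eq: "f = g \<Longrightarrow> qeq q m f g" using qeq_refl by simp

lemma qeq_sym: "qeq q m f g \<Longrightarrow> qeq q m g f"
proof -
  assume "qeq q m f g"
  then have "(\<lambda>w. -1 * (f w - g w)) \<in> QI" unfolding qeq_def fa_diff_def by (rule I_scale)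
  moreover have "(\<lambda>w. -1 * (f w - g w)) = (\<lambda>w. g w - f w)" by (simp add: fun_eq_iff)
  ultimately show ?thesis unfolding qeq_def fa_diff_def by simp
qed

lemma qeq_trans: "qeq q m f g \<Longrightarrow> qeq q m g h \<Longrightarrow> qeq q m f h"
  unfolding qeq_def fa_diff_def using I_add by fastforce

lemma qeq_scale: "qeq q m f g \<Longrightarrow> qeq q m (\<lambda>w. c * f w) (\<lambda>w. c * g w)"
proof -
  assume "qeq q m f g"
  then have "(\<lambda>w. c * (f w - g w)) \<in> QI" unfolding qeq_def fa_diff_def by (rule I_scale)
  moreover have "(\<lambda>w. c * (f w - g w)) = (\<lambda>w. c * f w - c * g w)" by (simp add: fun_eq_iff algebra_simps)
  ultimately show ?thesis unfolding qeq_def fa_diff_def by simp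
qed

lemma qeq_sum: "(\<And>i. i \<in> A \<Longrightarrow> qeq q m (F i) (G i)) \<Longrightarrow> qeq q m (\<lambda>w. \<Sum>i\<in>A. F i w) (\<lambda>w. \<Sum>i\<in>A. G i w)"
  unfolding qeq_def fa_diff_def using I_sum[of A "\<lambda>i w. F i w - G i w"]
  by (simp add: sum_subtractf)

lemma qeq_lmul: "qeq q m f g \<Longrightarrow> fin_supp h \<Longrightarrow> qeq q m (fa_mul h f) (fa_mul h g)"
proof -
  assume "qeq q m f g" "fin_supp h"
  then have "fa_mul h (\<lambda>w. 1 * f w + (-1) * g w) \<in> QI"
    unfolding qeq_def fa_diff_def by (auto intro: qideal.lmul)
  then show ?thesis unfolding qeq_def fa_diff_def fa_mul_lin_right by simp
qed

lemma qeq_rmul: "qeq q m f g \<Longrightarrow> fin_supp h \<Longrightarrow> qeq q m (fa_mul f h) (fa_mul g h)"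
proof -
  assume "qeq q m f g" "fin_supp h"
  then have "fa_mul (\<lambda>w. 1 * f w + (-1) * g w) h \<in> QI"
    unfolding qeq_def fa_diff_def by (auto intro: qideal.rmul)
  then show ?thesis unfolding qeq_def fa_diff_def fa_mul_lin_left by simp
qed

lemma qeq_swap: "1 \<le> k \<Longrightarrow> k < l \<Longrightarrow> l \<le> m \<Longrightarrow>
  qeq q m (fa_word (u @ [l, k] @ v)) (\<lambda>w. q k l * fa_word (u @ [k, l] @ v) w)"
proof -
  assume a: "1 \<le> k" "k < l" "l \<le> m"
  have r: "qrel q k l = (\<lambda>w. 1 * fa_word [l, k] w + (- q k l) * fa_word [k, l] w)"
    unfolding qrel_def fa_diff_def fa_scale_def by auto
  have "fa_mul (fa_mul (fa_word u) (qrel q k l)) (fa_word v) \<in> QI"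
    by (rule qideal.rmul[OF qideal.lmul[OF qideal.gen[OF a] fin_supp_word] fin_supp_word])
  moreover have "fa_mul (fa_mul (fa_word u) (qrel q k l)) (fa_word v)
     = (\<lambda>w. 1 * fa_word ((u @ [l, k]) @ v) w + (- q k l) * fa_word ((u @ [k, l]) @ v) w)"
    by (simp only: r fa_mul_lin_right fa_mul_lin_left fa_word_word)
  moreover have "fa_diff (fa_word (u @ [l, k] @ v)) (\<lambda>w. q k l * fa_word (u @ [k, l] @ v) w)
     = (\<lambda>w. 1 * fa_word ((u @ [l, k]) @ v) w + (- q k l) * fa_word ((u @ [k, l]) @ v) w)"
    unfolding fa_diff_def by (simp only: append_assoc) simp
  ultimately show ?thesis unfolding qeq_def by simp
qed

lemma qeq_word_rmul: "qeq q m (fa_word u) (\<lambda>w. c * fa_word u' w) \<Longrightarrow>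
   qeq q m (fa_word (u @ v)) (\<lambda>w. c * fa_word (u' @ v) w)"
  using qeq_rmul[OF _ fin_supp_word, of "fa_word u" "\<lambda>w. c * fa_word u' w" v]
  by (simp only: fa_word_word fa_mul_scale_left)

lemma qeq_word_lmul: "qeq q m (fa_word u) (\<lambda>w. c * fa_word u' w) \<Longrightarrow>
   qeq q m (fa_word (v @ u)) (\<lambda>w. c * fa_word (v @ u') w)"
  using qeq_lmul[OF _ fin_supp_word, of "fa_word u" "\<lambda>w. c * fa_word u' w" v]
  by (simp only: fa_word_word fa_mul_scale_right)

lemma cnt_sort: "count_list (sort xs) x = count_list xs x"
  by (simp add: count_mset[symmetric])

lemma sort_mset_eq: "mset xs = mset ys \<Longrightarrow> sort xs = sort ys"
  by (rule properties_for_sort) simp_all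

lemma mset_eq_cnt: "(\<And>x. count_list xs x = count_list ys x) \<Longrightarrow> mset xs = mset ys"
  by (simp add: multiset_eq_iff count_mset)

definition QF :: "nat \<Rightarrow> (nat \<Rightarrow> nat) \<Rightarrow> (nat \<Rightarrow> nat) \<Rightarrow> 'k" where
  "QF r cu cv = (\<Prod>l\<in>{1..r}. \<Prod>k\<in>{1..<l}. q k l ^ (cv k * cu l))"

lemma QF_add_left: "QF r (\<lambda>x. f x + g x) cv = QF r f cv * QF r g cv"
  unfolding QF_def by (simp add: prod.distrib[symmetric] power_add distrib_left)

lemma QF_add_right: "QF r cu (\<lambda>x. f x + g x) = QF r cu f * QF r cu g"
  unfolding QF_def by (simp add: prod.distrib[symmetric] power_add distrib_right)

lemma QF_zero_right: "QF r cu (\<lambda>x. 0) = 1"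
  unfolding QF_def by simp

lemma QF_delta_left: "(\<And>k'. k' < k \<Longrightarrow> cv k' = 0) \<Longrightarrow> QF r (\<lambda>x. if k = x then 1 else 0) cv = 1"
  unfolding QF_def by (intro prod.neutral ballI) auto

definition Pc :: "(nat \<Rightarrow> nat) \<Rightarrow> nat \<Rightarrow> 'k" where
  "Pc cu k = (\<Prod>l\<in>{1..m}. if k \<in> {1..<l} then q k l ^ cu l else 1)"

lemma QF_delta_right: "QF m cu (\<lambda>x. if k = x then 1 else 0) = Pc cu k"
  unfolding QF_def Pc_def
proof (rule prod.cong[OF refl])
  fix l
  have "(\<Prod>k'\<in>{1..<l}. q k' l ^ ((if k = k' then 1 else 0) * cu l))
      = (\<Prod>k'\<in>{1..<l}. if k' = k then q k l ^ cu l else 1)"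
    by (rule prod.cong) auto
  also have "\<dots> = (if k \<in> {1..<l} then q k l ^ cu l else 1)" by (simp add: prod.delta)
  finally show "(\<Prod>k'\<in>{1..<l}. q k' l ^ ((if k = k' then 1 else 0) * cu l))
      = (if k \<in> {1..<l} then q k l ^ cu l else 1)" .
qed

lemma Pc_snoc: "l \<in> {1..m} \<Longrightarrow> k \<in> {1..m} \<Longrightarrow> k < l \<Longrightarrow>
   Pc (count_list (u @ [l])) k = q k l * Pc (count_list u) k"
proof -
  assume a: "l \<in> {1..m}" "k \<in> {1..m}" "k < l"
  have "Pc (count_list (u @ [l])) k = (\<Prod>l'\<in>{1..m}. (if k \<in> {1..<l'} then q k l' ^ count_list u l' else 1)
          * (if l' = l then q k l else 1))"
    unfolding Pc_def
  proof (rule prod.cong[OF refl])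
    fix l' assume "l' \<in> {1..m}"
    have cnt: "count_list (u @ [l]) l' = count_list u l' + (if l' = l then 1 else 0)" by auto
    show "(if k \<in> {1..<l'} then q k l' ^ count_list (u @ [l]) l' else 1)
      = (if k \<in> {1..<l'} then q k l' ^ count_list u l' else 1) * (if l' = l then q k l else 1)"
      unfolding cnt using a by auto
  qed
  also have "\<dots> = Pc (count_list u) k * (\<Prod>l'\<in>{1..m}. if l' = l then q k l else 1)"
    unfolding Pc_def by (rule prod.distrib)
  also have "(\<Prod>l'\<in>{1..m}. if l' = l then q k l else 1) = q k l"
    using prod.delta[of "{1..m}" l "\<lambda>_. q k l"] a by simp
  finally show ?thesis by (simp only: mult.commute)
qed

lemma ins_nf: "sorted u \<Longrightarrow> set u \<subseteq> {1..m} \<Longrightarrow> k \<in> {1..m} \<Longrightarrow>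
  qeq q m (fa_word (u @ [k])) (\<lambda>w. Pc (count_list u) k * fa_word (sort (u @ [k])) w)"
proof (induction u rule: rev_induct)
  case Nil
  have "Pc (\<lambda>a. 0) k = 1" unfolding Pc_def by (intro prod.neutral) simp
  then show ?case by (simp add: qeq_refl)
next
  case (snoc l u')
  have su': "sorted u'" and le: "\<And>x. x \<in> set u' \<Longrightarrow> x \<le> l"
    using snoc.prems(1) by (auto simp: sorted_append)
  have l: "l \<in> {1..m}" using snoc.prems by auto
  show ?case
  proof (cases "k < l")
    case True
    have s1: "qeq q m (fa_word ((u' @ [l]) @ [k])) (\<lambda>w. q k l * fa_word (u' @ [k, l]) w)"
      using qeq_swap[of k l u' "[]"] True snoc.prems l by simp
    have IH: "qeq q m (fa_word (u' @ [k])) (\<lambda>w. Pc (count_list u') k * fa_word (sort (u' @ [k])) w)"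
      using snoc su' by auto
    have s2: "qeq q m (fa_word (u' @ [k, l])) (\<lambda>w. Pc (count_list u') k * fa_word (sort (u' @ [k]) @ [l]) w)"
      using qeq_word_rmul[OF IH, of "[l]"] by simp
    have srt: "sort ((u' @ [l]) @ [k]) = sort (u' @ [k]) @ [l]"
    proof (rule properties_for_sort)
      show "mset (sort (u' @ [k]) @ [l]) = mset ((u' @ [l]) @ [k])" by simp
      show "sorted (sort (u' @ [k]) @ [l])"
        using le True by (auto simp: sorted_append)
    qed
    have PC: "Pc (count_list (u' @ [l])) k = q k l * Pc (count_list u') k"
      using Pc_snoc[OF l snoc.prems(3) True] .
    show ?thesis unfolding srt PC mult.assoc by (rule qeq_trans[OF s1 qeq_scale[OF s2]])
  next
    case False
    have "sorted ((u' @ [l]) @ [k])" using snoc.prems(1) le False by (fastforce simp: sorted_append intro: order_trans)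
    then have srt: "sort ((u' @ [l]) @ [k]) = (u' @ [l]) @ [k]" by (rule sorted_sort_id)
    have PC1: "Pc (count_list (u' @ [l])) k = 1"
      unfolding Pc_def
    proof (intro prod.neutral ballI)
      fix l' assume "l' \<in> {1..m}"
      show "(if k \<in> {1..<l'} then q k l' ^ count_list (u' @ [l]) l' else 1) = 1"
      proof (cases "k < l'")
        case True
        then have "l' \<notin> set (u' @ [l])" using le False by fastforce
        then show ?thesis by simp
      qed simp
    qed
    show ?thesis unfolding srt PC1 mult_1 by (rule qeq_refl)
  qed
qed

lemma nf: "sorted u \<Longrightarrow> sorted v \<Longrightarrow> set u \<subseteq> {1..m} \<Longrightarrow> set v \<subseteq> {1..m} \<Longrightarrow>
  qeq q m (fa_word (u @ v)) (\<lambda>w. QF m (count_list u) (count_list v) * fa_word (sort (u @ v)) w)"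
proof (induction v arbitrary: u)
  case Nil
  have "QF m (count_list u) (\<lambda>a. 0) = 1" by (rule QF_zero_right)
  then show ?case using Nil by (simp add: sorted_sort_id qeq_refl)
next
  case (Cons k v')
  have k: "k \<in> {1..m}" and sv': "sorted v'" and ge: "\<And>x. x \<in> set v' \<Longrightarrow> k \<le> x"
    using Cons.prems by auto
  have s1: "qeq q m (fa_word ((u @ [k]) @ v')) (\<lambda>w. Pc (count_list u) k * fa_word (sort (u @ [k]) @ v') w)"
    using qeq_word_rmul[OF ins_nf[OF Cons.prems(1) Cons.prems(3) k]] by simp
  have IH: "qeq q m (fa_word (sort (u @ [k]) @ v'))
     (\<lambda>w. QF m (count_list (sort (u @ [k]))) (count_list v') * fa_word (sort (sort (u @ [k]) @ v')) w)"
    using Cons.IH[of "sort (u @ [k])"] sv' Cons.prems k by auto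
  have srt: "sort (sort (u @ [k]) @ v') = sort (u @ k # v')" by (rule sort_mset_eq) simp
  have c1: "count_list (sort (u @ [k])) = (\<lambda>x. count_list u x + (if k = x then 1 else 0))"
    by (simp add: cnt_sort fun_eq_iff)
  have c2: "count_list (k # v') = (\<lambda>x. (if k = x then 1 else 0) + count_list v' x)"
    by (simp add: fun_eq_iff)
  have z: "\<And>k'. k' < k \<Longrightarrow> count_list v' k' = 0"
    using ge by (metis count_notin leD)
  have coef: "Pc (count_list u) k * QF m (count_list (sort (u @ [k]))) (count_list v')
      = QF m (count_list u) (count_list (k # v'))"
  proof -
    have z1: "QF m (\<lambda>x. if k = x then 1 else 0) (count_list v') = 1"
      by (rule QF_delta_left) (use z in auto)
    show ?thesis unfolding c1 c2 QF_add_left QF_add_right QF_delta_right z1 by simp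
  qed
  have "qeq q m (fa_word ((u @ [k]) @ v'))
     (\<lambda>w. Pc (count_list u) k * (QF m (count_list (sort (u @ [k]))) (count_list v') * fa_word (sort (sort (u @ [k]) @ v')) w))"
    by (rule qeq_trans[OF s1 qeq_scale[OF IH]])
  then show ?case unfolding srt mult.assoc[symmetric] coef append_assoc append_Cons append_Nil .
qed
end

locale qsetup =
  fixes sc :: "'k::field \<Rightarrow> 'a::ring_1 \<Rightarrow> 'a"
    and m :: nat
    and phi D :: "nat \<Rightarrow> 'a \<Rightarrow> 'a"
    and q :: "nat \<Rightarrow> nat \<Rightarrow> 'k"
    and eps :: "'a \<Rightarrow> 'k"
  assumes alg: "is_algebra sc"
    and aut: "\<And>k. k \<in> {1..m} \<Longrightarrow> is_algebra_automorphism sc (phi k)"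
    and der: "\<And>k. k \<in> {1..m} \<Longrightarrow> is_skew_derivation sc (phi k) (D k)"
    and lnil: "\<And>k. k \<in> {1..m} \<Longrightarrow> locally_nilpotent (D k)"
    and comm: "\<And>k l x. k \<in> {1..m} \<Longrightarrow> l \<in> {1..m} \<Longrightarrow>
                 D l (phi k x) = sc (q k l) (phi k (D l x))"
    and qroot: "\<And>k n. k \<in> {1..m} \<Longrightarrow> n > 0 \<Longrightarrow> q k k ^ n \<noteq> 1"
    and eps_hom: "is_algebra_hom_to_field sc eps"
    and eps_phi: "\<And>k x. k \<in> {1..m} \<Longrightarrow> eps (phi k x) = eps x"
begin

lemma modsc: "module sc" using alg unfolding is_algebra_def by auto

sublocale S: module sc by (rule modsc)

lemma sc_mult_left: "sc c x * y = sc c (x * y)" using alg unfolding is_algebra_def by auto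
lemma sc_mult_right: "x * sc c y = sc c (x * y)" using alg unfolding is_algebra_def by metis

lemma lin_add: "is_linear_map sc f \<Longrightarrow> f (x + y) = f x + f y"
  unfolding is_linear_map_def by auto
lemma lin_sc: "is_linear_map sc f \<Longrightarrow> f (sc c x) = sc c (f x)"
  unfolding is_linear_map_def by auto
lemma lin_zero: "is_linear_map sc f \<Longrightarrow> f 0 = 0"
  using lin_sc[of f 0 0] by simp
lemma lin_sum: "is_linear_map sc f \<Longrightarrow> f (\<Sum>i\<in>I. g i) = (\<Sum>i\<in>I. f (g i))"
  by (induction I rule: infinite_finite_induct) (auto simp: lin_zero lin_add)
lemma lin_comp: "is_linear_map sc f \<Longrightarrow> is_linear_map sc g \<Longrightarrow> is_linear_map sc (f \<circ> g)"
  unfolding is_linear_map_def by auto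
lemma lin_id: "is_linear_map sc id"
  unfolding is_linear_map_def by auto
lemma lin_pow: "is_linear_map sc f \<Longrightarrow> is_linear_map sc (f ^^ n)"
  by (induction n) (auto simp: lin_id lin_comp)
lemma lin_scale: "is_linear_map sc (sc c)"
  unfolding is_linear_map_def by (auto simp: S.scale_right_distrib mult.commute)

lemma linD: "k \<in> {1..m} \<Longrightarrow> is_linear_map sc (D k)"
  using der unfolding is_skew_derivation_def by auto
lemma linphi: "k \<in> {1..m} \<Longrightarrow> is_linear_map sc (phi k)"
  using aut unfolding is_algebra_automorphism_def by auto
lemma Dmul: "k \<in> {1..m} \<Longrightarrow> D k (a * b) = D k a * b + phi k a * D k b"
  using der unfolding is_skew_derivation_def by auto
lemma phimul: "k \<in> {1..m} \<Longrightarrow> phi k (a * b) = phi k a * phi k b"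
  using aut unfolding is_algebra_automorphism_def by auto
lemma phipow_mul: "k \<in> {1..m} \<Longrightarrow> (phi k ^^ n) (a * b) = (phi k ^^ n) a * (phi k ^^ n) b"
  by (induction n) (auto simp: phimul)

lemma eps_add: "eps (x + y) = eps x + eps y" using eps_hom unfolding is_algebra_hom_to_field_def by auto
lemma eps_sc: "eps (sc c x) = c * eps x" using eps_hom unfolding is_algebra_hom_to_field_def by auto
lemma eps_mul: "eps (x * y) = eps x * eps y" using eps_hom unfolding is_algebra_hom_to_field_def by auto
lemma eps_zero: "eps 0 = 0" using eps_sc[of 0 0] by simp
lemma eps_sum: "eps (\<Sum>i\<in>I. g i) = (\<Sum>i\<in>I. eps (g i))"
  by (induction I rule: infinite_finite_induct) (auto simp: eps_zero eps_add)
lemma eps_phipow: "k \<in> {1..m} \<Longrightarrow> eps ((phi k ^^ n) x) = eps x"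
  by (induction n) (auto simp: eps_phi)

lemma D_phipow: "k \<in> {1..m} \<Longrightarrow> l \<in> {1..m} \<Longrightarrow>
   D l ((phi k ^^ n) x) = sc (q k l ^ n) ((phi k ^^ n) (D l x))"
proof (induction n)
  case 0 then show ?case by simp
next
  case (Suc n)
  have "D l ((phi k ^^ Suc n) x) = sc (q k l) (phi k (D l ((phi k ^^ n) x)))"
    using Suc by (simp add: comm)
  also have "\<dots> = sc (q k l) (phi k (sc (q k l ^ n) ((phi k ^^ n) (D l x))))"
    using Suc by simp
  also have "\<dots> = sc (q k l ^ Suc n) ((phi k ^^ Suc n) (D l x))"
    using Suc by (simp add: lin_sc linphi mult.commute)
  finally show ?case .
qed


definition br :: "'k \<Rightarrow> nat \<Rightarrow> 'k" where "br r n = (1 - r ^ n) / (1 - r)"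

lemma qfact_Suc: "qfact r (Suc n) = qfact r n * br r (Suc n)"
  unfolding qfact_def br_def by (simp add: prod.cl_ivl_Suc)

lemma qfact_0: "qfact r 0 = 1" unfolding qfact_def by simp

lemma br_0: "br r 0 = 0" unfolding br_def by simp

lemma br_split: "i \<le> N \<Longrightarrow> br r N = r ^ i * br r (N - i) + br r i"
proof -
  assume "i \<le> N"
  then have "r ^ N = r ^ i * r ^ (N - i)" by (simp add: power_add[symmetric])
  then show ?thesis unfolding br_def
    by (simp add: add_divide_distrib[symmetric] algebra_simps)
qed

context
  fixes k assumes k: "k \<in> {1..m}"
begin

lemma q_ne1: "q k k \<noteq> 1" using qroot[OF k, of 1] by simp

lemma br_ne0: "n > 0 \<Longrightarrow> br (q k k) n \<noteq> 0"
  using qroot[OF k, of n] q_ne1 unfolding br_def by auto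

lemma qfact_ne0: "qfact (q k k) n \<noteq> 0"
  by (induction n) (auto simp: qfact_0 qfact_Suc br_ne0)

abbreviation dp where "dp n z \<equiv> divided_power sc (q k k) (D k) n z"

lemma dp_lin: "is_linear_map sc (dp n)"
proof -
  have "dp n = sc (inverse (qfact (q k k) n)) \<circ> (D k ^^ n)"
    unfolding divided_power_def by auto
  then show ?thesis using lin_comp[OF lin_scale lin_pow[OF linD[OF k]]] by metis
qed

lemma dp_0: "dp 0 z = z" unfolding divided_power_def by (simp add: qfact_0)

lemma dp_Suc: "D k (dp n z) = sc (br (q k k) (Suc n)) (dp (Suc n) z)"
proof -
  have "sc (br (q k k) (Suc n)) (dp (Suc n) z)
      = sc (br (q k k) (Suc n) * inverse (qfact (q k k) n * br (q k k) (Suc n))) (D k ((D k ^^ n) z))"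
    unfolding divided_power_def by (simp add: qfact_Suc)
  also have "br (q k k) (Suc n) * inverse (qfact (q k k) n * br (q k k) (Suc n)) = inverse (qfact (q k k) n)"
    using br_ne0[of "Suc n"] by (simp add: field_simps)
  finally show ?thesis unfolding divided_power_def by (simp add: lin_sc linD[OF k])
qed

lemma dp_leibniz: "dp n (x * y) = (\<Sum>i\<le>n. (phi k ^^ i) (dp (n - i) x) * dp i y)"
proof (induction n)
  case 0 then show ?case by (simp add: dp_0)
next
  case (Suc n)
  let ?r = "q k k"
  define T where "T i = (phi k ^^ i) (dp (Suc n - i) x) * dp i y" for i
  have lD: "is_linear_map sc (D k)" by (rule linD[OF k])
  have "sc (br ?r (Suc n)) (dp (Suc n) (x * y)) = D k (dp n (x * y))" by (simp add: dp_Suc)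
  also have "\<dots> = (\<Sum>i\<le>n. D k ((phi k ^^ i) (dp (n - i) x) * dp i y))"
    using Suc by (simp add: lin_sum[OF lD])
  also have "\<dots> = (\<Sum>i\<le>n. sc (?r ^ i * br ?r (Suc n - i)) (T i))
                 + (\<Sum>i\<le>n. sc (br ?r (Suc i)) (T (Suc i)))"
  proof -
    have "D k ((phi k ^^ i) (dp (n - i) x) * dp i y)
        = sc (?r ^ i * br ?r (Suc n - i)) (T i) + sc (br ?r (Suc i)) (T (Suc i))" if "i \<le> n" for i
    proof -
      have e1: "Suc (n - i) = Suc n - i" using that by simp
      have "D k ((phi k ^^ i) (dp (n - i) x) * dp i y)
          = D k ((phi k ^^ i) (dp (n - i) x)) * dp i y + (phi k ^^ Suc i) (dp (n - i) x) * D k (dp i y)"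
        by (simp add: Dmul[OF k])
      also have "D k ((phi k ^^ i) (dp (n - i) x)) = sc (?r ^ i) ((phi k ^^ i) (D k (dp (n - i) x)))"
        by (rule D_phipow[OF k k])
      also have "D k (dp (n - i) x) = sc (br ?r (Suc n - i)) (dp (Suc n - i) x)"
        using dp_Suc e1 by metis
      also have "D k (dp i y) = sc (br ?r (Suc i)) (dp (Suc i) y)" by (rule dp_Suc)
      finally show ?thesis unfolding T_def
        by (simp add: lin_sc[OF lin_pow[OF linphi[OF k]]] sc_mult_left sc_mult_right mult.commute)
    qed
    then show ?thesis by (simp add: sum.distrib)
  qed
  also have "(\<Sum>i\<le>n. sc (?r ^ i * br ?r (Suc n - i)) (T i)) = (\<Sum>i\<le>Suc n. sc (?r ^ i * br ?r (Suc n - i)) (T i))"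
    by (simp add: br_0)
  also have "(\<Sum>i\<le>n. sc (br ?r (Suc i)) (T (Suc i))) = (\<Sum>i\<le>Suc n. sc (br ?r i) (T i))"
    using sum.atMost_Suc_shift[of "\<lambda>i. sc (br ?r i) (T i)" n] by (simp add: br_0)
  also have "(\<Sum>i\<le>Suc n. sc (?r ^ i * br ?r (Suc n - i)) (T i)) + (\<Sum>i\<le>Suc n. sc (br ?r i) (T i))
      = (\<Sum>i\<le>Suc n. sc (br ?r (Suc n)) (T i))"
    unfolding sum.distrib[symmetric]
  proof (rule sum.cong)
    fix i assume "i \<in> {..Suc n}"
    then have "br ?r (Suc n) = ?r ^ i * br ?r (Suc n - i) + br ?r i" by (intro br_split) auto
    then show "sc (?r ^ i * br ?r (Suc n - i)) (T i) + sc (br ?r i) (T i) = sc (br ?r (Suc n)) (T i)"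
      by (simp add: S.scale_left_distrib[symmetric])
  qed simp
  also have "\<dots> = sc (br ?r (Suc n)) (\<Sum>i\<le>Suc n. T i)" by (rule S.scale_sum_right[symmetric])
  finally have "sc (br ?r (Suc n)) (dp (Suc n) (x * y)) = sc (br ?r (Suc n)) (\<Sum>i\<le>Suc n. T i)" .
  then have "sc (inverse (br ?r (Suc n))) (sc (br ?r (Suc n)) (dp (Suc n) (x * y)))
     = sc (inverse (br ?r (Suc n))) (sc (br ?r (Suc n)) (\<Sum>i\<le>Suc n. T i))" by simp
  then show ?case using br_ne0[of "Suc n"] unfolding T_def by simp
qed

end

abbreviation iter where "iter r a x \<equiv> iter_divided sc q D r a x"

lemma iter_0: "iter 0 a x = x" unfolding iter_divided_def by simp

lemma iter_Suc: "iter (Suc r) a x = divided_power sc (q (Suc r) (Suc r)) (D (Suc r)) (a (Suc r)) (iter r a x)"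
  unfolding iter_divided_def by simp

definition Psi :: "nat \<Rightarrow> (nat \<Rightarrow> nat) \<Rightarrow> 'a \<Rightarrow> 'a" where
  "Psi r j z = fold (\<lambda>k z. (phi k ^^ j k) z) [1..<Suc r] z"

lemma Psi_0: "Psi 0 j z = z" unfolding Psi_def by simp
lemma Psi_Suc: "Psi (Suc r) j z = (phi (Suc r) ^^ j (Suc r)) (Psi r j z)"
  unfolding Psi_def by simp

abbreviation Qf where "Qf \<equiv> QF q"

lemma Qf_0: "Qf 0 cu cv = 1" unfolding QF_def by simp
lemma Qf_Suc: "Qf (Suc r) cu cv = Qf r cu cv * (\<Prod>k\<in>{1..r}. q k (Suc r) ^ (cv k * cu (Suc r)))"
proof -
  define G where "G l = (\<Prod>k\<in>{1..<l}. q k l ^ (cv k * cu l))" for l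
  have e: "(\<Prod>l\<in>{1..Suc r}. G l) = (\<Prod>l\<in>{1..r}. G l) * G (Suc r)"
    by (rule prod.cl_ivl_Suc[THEN trans]) simp
  have "G (Suc r) = (\<Prod>k\<in>{1..r}. q k (Suc r) ^ (cv k * cu (Suc r)))"
    unfolding G_def by (simp only: atLeastLessThanSuc_atLeastAtMost)
  then show ?thesis using e unfolding QF_def G_def[symmetric] by simp
qed

lemma Qf_cong: "(\<And>k. k \<in> {1..r} \<Longrightarrow> cu k = cu' k) \<Longrightarrow> (\<And>k. k \<in> {1..r} \<Longrightarrow> cv k = cv' k)
   \<Longrightarrow> Qf r cu cv = Qf r cu' cv'"
  unfolding QF_def by (intro prod.cong refl) auto

lemma iter_cong: "(\<And>k. k \<in> {1..r} \<Longrightarrow> a k = a' k) \<Longrightarrow> iter r a x = iter r a' x"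
  by (induction r) (auto simp: iter_0 iter_Suc)

lemma Psi_cong: "(\<And>k. k \<in> {1..r} \<Longrightarrow> a k = a' k) \<Longrightarrow> Psi r a x = Psi r a' x"
  by (induction r) (auto simp: Psi_0 Psi_Suc)

lemma iter_lin: "r \<le> m \<Longrightarrow> is_linear_map sc (iter r a)"
proof (induction r)
  case 0 then show ?case using lin_id by (simp add: iter_0 id_def)
next
  case (Suc r)
  have k: "Suc r \<in> {1..m}" using Suc by auto
  have eq: "iter (Suc r) a = divided_power sc (q (Suc r) (Suc r)) (D (Suc r)) (a (Suc r)) \<circ> iter r a"
    by (auto simp: iter_Suc)
  show ?case unfolding eq by (rule lin_comp[OF dp_lin[OF k] Suc.IH]) (use Suc in simp)
qed

lemma Psi_lin: "r \<le> m \<Longrightarrow> is_linear_map sc (Psi r j)"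
proof (induction r)
  case 0 then show ?case using lin_id by (simp add: Psi_0 id_def)
next
  case (Suc r)
  have k: "Suc r \<in> {1..m}" using Suc by auto
  have eq: "Psi (Suc r) j = (phi (Suc r) ^^ j (Suc r)) \<circ> Psi r j"
    by (auto simp: Psi_Suc)
  show ?case unfolding eq by (rule lin_comp[OF lin_pow[OF linphi[OF k]] Suc.IH]) (use Suc in simp)
qed

lemma Psi_eps: "r \<le> m \<Longrightarrow> eps (Psi r j z) = eps z"
  by (induction r) (auto simp: Psi_0 Psi_Suc eps_phipow)

lemma Psi_mul: "r \<le> m \<Longrightarrow> Psi r j (x * y) = Psi r j x * Psi r j y"
  by (induction r) (auto simp: Psi_0 Psi_Suc phipow_mul)

lemma D_Psi: "r < l \<Longrightarrow> l \<le> m \<Longrightarrow>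
   D l (Psi r j z) = sc (\<Prod>k\<in>{1..r}. q k l ^ j k) (Psi r j (D l z))"
proof (induction r arbitrary: z)
  case 0 then show ?case by (simp add: Psi_0)
next
  case (Suc r)
  have k: "Suc r \<in> {1..m}" "l \<in> {1..m}" using Suc by auto
  have "D l (Psi (Suc r) j z) = sc (q (Suc r) l ^ j (Suc r)) ((phi (Suc r) ^^ j (Suc r)) (D l (Psi r j z)))"
    by (simp add: Psi_Suc D_phipow[OF k])
  also have "\<dots> = sc (q (Suc r) l ^ j (Suc r) * (\<Prod>k\<in>{1..r}. q k l ^ j k)) (Psi (Suc r) j (D l z))"
    using Suc by (simp add: lin_sc[OF lin_pow[OF linphi[OF k(1)]]] Psi_Suc)
  finally show ?case by (simp add: prod.cl_ivl_Suc mult.commute)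
qed

lemma Dpow_Psi: "r < l \<Longrightarrow> l \<le> m \<Longrightarrow>
   (D l ^^ n) (Psi r j z) = sc ((\<Prod>k\<in>{1..r}. q k l ^ j k) ^ n) (Psi r j ((D l ^^ n) z))"
proof (induction n)
  case 0 then show ?case by simp
next
  case (Suc n)
  have l: "l \<in> {1..m}" using Suc by auto
  show ?case using Suc by (simp add: D_Psi lin_sc[OF linD[OF l]] mult.commute)
qed

lemma dp_Psi: "r < l \<Longrightarrow> l \<le> m \<Longrightarrow>
   divided_power sc (q l l) (D l) n (Psi r j z)
   = sc (\<Prod>k\<in>{1..r}. q k l ^ (j k * n)) (Psi r j (divided_power sc (q l l) (D l) n z))"
proof -
  assume a: "r < l" "l \<le> m"
  have "(\<Prod>k\<in>{1..r}. q k l ^ j k) ^ n = (\<Prod>k\<in>{1..r}. q k l ^ (j k * n))"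
    by (simp add: prod_power_distrib power_mult)
  then show ?thesis unfolding divided_power_def using a
    by (simp add: Dpow_Psi lin_sc[OF Psi_lin] mult.commute)
qed

definition J :: "nat \<Rightarrow> (nat \<Rightarrow> nat) \<Rightarrow> (nat \<Rightarrow> nat) set" where
  "J r a = {j. \<forall>k. j k \<le> a k \<and> (k \<notin> {1..r} \<longrightarrow> j k = 0)}"

lemma J_finite: "finite (J r a)"
proof -
  have "J r a \<subseteq> {f. \<forall>x. (x \<in> {1..r} \<longrightarrow> f x \<in> {0..Max (a ` {1..r})}) \<and> (x \<notin> {1..r} \<longrightarrow> f x = 0)}"
  proof
    fix j assume j: "j \<in> J r a"
    have "j x \<in> {0..Max (a ` {1..r})}" if "x \<in> {1..r}" for x
    proof -
      have "a x \<le> Max (a ` {1..r})" using that by (intro Max_ge) auto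
      then show ?thesis using j unfolding J_def by (auto intro: le_trans)
    qed
    then show "j \<in> {f. \<forall>x. (x \<in> {1..r} \<longrightarrow> f x \<in> {0..Max (a ` {1..r})}) \<and> (x \<notin> {1..r} \<longrightarrow> f x = 0)}"
      using j unfolding J_def by auto
  qed
  then show ?thesis using finite_set_of_finite_funs[of "{1..r}" "{0..Max (a ` {1..r})}" 0]
    by (auto intro: finite_subset)
qed

lemma J_0: "J 0 a = {\<lambda>k. 0}" unfolding J_def by auto

lemma J_Suc: "J (Suc r) a = (\<lambda>(j,i). j(Suc r := i)) ` (J r a \<times> {..a (Suc r)})"
proof
  show "J (Suc r) a \<subseteq> (\<lambda>(j,i). j(Suc r := i)) ` (J r a \<times> {..a (Suc r)})"
  proof
    fix j assume j: "j \<in> J (Suc r) a"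
    have "j = (\<lambda>(j,i). j(Suc r := i)) (j(Suc r := 0), j (Suc r))" by auto
    moreover have "(j(Suc r := 0), j (Suc r)) \<in> J r a \<times> {..a (Suc r)}"
      using j unfolding J_def by auto
    ultimately show "j \<in> (\<lambda>(j,i). j(Suc r := i)) ` (J r a \<times> {..a (Suc r)})" by blast
  qed
  show "(\<lambda>(j,i). j(Suc r := i)) ` (J r a \<times> {..a (Suc r)}) \<subseteq> J (Suc r) a"
    unfolding J_def by auto
qed

lemma J_inj: "inj_on (\<lambda>(j,i). j(Suc r := i)) (J r a \<times> {..a (Suc r)})"
proof (rule inj_onI, clarsimp)
  fix j i j' i'
  assume "j \<in> J r a" "j' \<in> J r a" and e: "j(Suc r := i) = j'(Suc r := i')"
  then have "j (Suc r) = 0" "j' (Suc r) = 0" unfolding J_def by auto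
  moreover have "i = i'" using fun_cong[OF e, of "Suc r"] by simp
  moreover have "\<And>k. k \<noteq> Suc r \<Longrightarrow> j k = j' k" using e by (metis fun_upd_other)
  ultimately show "j = j' \<and> i = i'" by (metis ext)
qed

lemma leibnizA: "r \<le> m \<Longrightarrow> iter r a (x * y) =
  (\<Sum>j\<in>J r a. sc (Qf r (\<lambda>k. a k - j k) j) (Psi r j (iter r (\<lambda>k. a k - j k) x) * iter r j y))"
proof (induction r)
  case 0 then show ?case by (simp add: J_0 iter_0 Psi_0 Qf_0)
next
  case (Suc r)
  define s where "s = Suc r"
  have s: "s \<in> {1..m}" using Suc s_def by auto
  have rm: "r \<le> m" using Suc by auto
  let ?d = "divided_power sc (q s s) (D s)"
  let ?C = "\<lambda>j. Qf r (\<lambda>k. a k - j k) j"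
  let ?X = "\<lambda>j. iter r (\<lambda>k. a k - j k) x"
  let ?Y = "\<lambda>j. iter r j y"
  let ?c = "\<lambda>j n. \<Prod>k\<in>{1..r}. q k s ^ (j k * n)"
  let ?F = "\<lambda>j'. sc (Qf s (\<lambda>k. a k - j' k) j') (Psi s j' (iter s (\<lambda>k. a k - j' k) x) * iter s j' y)"
  have "iter s a (x * y) = ?d (a s) (iter r a (x * y))" by (simp add: s_def iter_Suc)
  also have "\<dots> = (\<Sum>j\<in>J r a. sc (?C j) (?d (a s) (Psi r j (?X j) * ?Y j)))"
    using Suc.IH[OF rm] by (simp add: lin_sum[OF dp_lin[OF s]] lin_sc[OF dp_lin[OF s]])
  also have "\<dots> = (\<Sum>j\<in>J r a. \<Sum>i\<le>a s. ?F (j(s := i)))"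
  proof (rule sum.cong[OF refl])
    fix j assume jJ: "j \<in> J r a"
    have "sc (?C j) (?d (a s) (Psi r j (?X j) * ?Y j))
       = sc (?C j) (\<Sum>i\<le>a s. (phi s ^^ i) (?d (a s - i) (Psi r j (?X j))) * ?d i (?Y j))"
      by (simp add: dp_leibniz[OF s])
    also have "\<dots> = (\<Sum>i\<le>a s. sc (?C j) ((phi s ^^ i) (?d (a s - i) (Psi r j (?X j))) * ?d i (?Y j)))"
      by (rule S.scale_sum_right)
    also have "\<dots> = (\<Sum>i\<le>a s. ?F (j(s := i)))"
    proof (rule sum.cong[OF refl])
      fix i assume i: "i \<in> {..a s}"
      let ?j' = "j(s := i)"
      have agree: "\<And>k. k \<in> {1..r} \<Longrightarrow> ?j' k = j k" using s_def by auto
      have e1: "Psi s ?j' z = (phi s ^^ i) (Psi r j z)" for z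
        using Psi_cong[of r ?j' j] agree by (simp add: s_def Psi_Suc)
      have e2: "iter s (\<lambda>k. a k - ?j' k) x = ?d (a s - i) (?X j)"
        using iter_cong[of r "\<lambda>k. a k - ?j' k" "\<lambda>k. a k - j k"] agree by (simp add: s_def iter_Suc)
      have e3: "iter s ?j' y = ?d i (?Y j)"
        using iter_cong[of r ?j' j] agree by (simp add: s_def iter_Suc)
      have e4: "Qf s (\<lambda>k. a k - ?j' k) ?j' = ?C j * ?c j (a s - i)"
      proof -
        have "Qf s (\<lambda>k. a k - ?j' k) ?j' = Qf r (\<lambda>k. a k - ?j' k) ?j' * (\<Prod>k\<in>{1..r}. q k s ^ (?j' k * (a s - ?j' s)))"
          by (simp add: s_def Qf_Suc)
        also have "Qf r (\<lambda>k. a k - ?j' k) ?j' = ?C j" by (rule Qf_cong) (use agree in auto)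
        also have "(\<Prod>k\<in>{1..r}. q k s ^ (?j' k * (a s - ?j' s))) = ?c j (a s - i)"
          by (rule prod.cong) (use agree in auto)
        finally show ?thesis .
      qed
      have "?d (a s - i) (Psi r j (?X j)) = sc (?c j (a s - i)) (Psi r j (?d (a s - i) (?X j)))"
        by (rule dp_Psi) (use Suc s_def in auto)
      then have "sc (?C j) ((phi s ^^ i) (?d (a s - i) (Psi r j (?X j))) * ?d i (?Y j))
         = sc (?C j * ?c j (a s - i)) ((phi s ^^ i) (Psi r j (?d (a s - i) (?X j))) * ?d i (?Y j))"
        by (simp add: lin_sc[OF lin_pow[OF linphi[OF s]]] sc_mult_left)
      also have "\<dots> = ?F ?j'" using e1 e2 e3 e4 by simp
      finally show "sc (?C j) ((phi s ^^ i) (?d (a s - i) (Psi r j (?X j))) * ?d i (?Y j)) = ?F ?j'" .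
    qed
    finally show "sc (?C j) (?d (a s) (Psi r j (?X j) * ?Y j)) = (\<Sum>i\<le>a s. ?F (j(s := i)))" .
  qed
  also have "\<dots> = (\<Sum>p\<in>J r a \<times> {..a s}. ?F ((\<lambda>(j,i). j(s := i)) p))"
    by (simp add: sum.cartesian_product split_def)
  also have "\<dots> = (\<Sum>j'\<in>J s a. ?F j')"
    unfolding s_def J_Suc by (rule sum.reindex[OF J_inj, symmetric, unfolded comp_def])
  finally show ?case by (simp add: s_def)
qed

lemma leibniz_eps: "eps (iter m a (x * y)) =
  (\<Sum>j\<in>J m a. Qf m (\<lambda>k. a k - j k) j * eps (iter m (\<lambda>k. a k - j k) x) * eps (iter m j y))"
  by (simp add: leibnizA eps_sum eps_sc eps_mul Psi_eps mult.assoc)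

lemma Dpow_zero_ge: "k \<in> {1..m} \<Longrightarrow> (D k ^^ n) v = 0 \<Longrightarrow> n \<le> n' \<Longrightarrow> (D k ^^ n') v = 0"
proof -
  assume k: "k \<in> {1..m}" and z: "(D k ^^ n) v = 0" and le: "n \<le> n'"
  have "(D k ^^ n') v = (D k ^^ ((n' - n) + n)) v" using le by simp
  also have "\<dots> = (D k ^^ (n' - n)) ((D k ^^ n) v)" by (simp only: funpow_add comp_apply)
  finally have "(D k ^^ n') v = (D k ^^ (n' - n)) ((D k ^^ n) v)" .
  then show ?thesis using z lin_zero[OF lin_pow[OF linD[OF k]]] by simp
qed

lemma nil_bound: "r \<le> m \<Longrightarrow> \<exists>N. \<forall>a. (\<exists>k\<in>{1..r}. N \<le> a k) \<longrightarrow> iter r a x = 0"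
proof (induction r)
  case 0 then show ?case by auto
next
  case (Suc r)
  define s where "s = Suc r"
  have s: "s \<in> {1..m}" using Suc s_def by auto
  obtain N where N: "\<And>a. (\<exists>k\<in>{1..r}. N \<le> a k) \<Longrightarrow> iter r a x = 0" using Suc by auto
  define B where "B = {a. \<forall>k. (k \<in> {1..r} \<longrightarrow> a k \<in> {0..N}) \<and> (k \<notin> {1..r} \<longrightarrow> a k = 0)}"
  have fB: "finite B" unfolding B_def by (rule finite_set_of_finite_funs) auto
  define V where "V = (\<lambda>a. iter r a x) ` B"
  have fV: "finite V" unfolding V_def using fB by auto
  define nv where "nv v = (SOME n. (D s ^^ n) v = 0)" for v
  have nv: "(D s ^^ nv v) v = 0" for v
  proof -
    have "\<exists>n. (D s ^^ n) v = 0" using lnil[OF s] unfolding locally_nilpotent_def by blast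
    then show ?thesis unfolding nv_def by (rule someI_ex)
  qed
  define N2 where "N2 = Max (insert 0 (nv ` V))"
  have N2: "v \<in> V \<Longrightarrow> nv v \<le> N2" for v unfolding N2_def by (rule Max_ge) (use fV in auto)
  show ?case
  proof (intro exI[of _ "max N N2"] allI impI)
    fix a assume "\<exists>k\<in>{1..Suc r}. max N N2 \<le> a k"
    then obtain k where k: "k \<in> {1..Suc r}" "max N N2 \<le> a k" by auto
    have dpz: "divided_power sc (q s s) (D s) n 0 = 0" for n by (rule lin_zero[OF dp_lin[OF s]])
    show "iter (Suc r) a x = 0"
    proof (cases "\<exists>k\<in>{1..r}. N \<le> a k")
      case True
      then show ?thesis using N[OF True] dpz by (simp add: iter_Suc s_def)
    next
      case False
      have ks: "k = s"
      proof (rule ccontr)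
        assume "k \<noteq> s"
        then have "k \<in> {1..r}" using k(1) s_def by auto
        moreover have "N \<le> a k" using k(2) by simp
        ultimately show False using False by blast
      qed
      define a0 where "a0 k = (if k \<in> {1..r} then a k else 0)" for k
      have "a0 \<in> B" using False unfolding a0_def B_def by (auto simp: not_le less_imp_le)
      moreover have "iter r a x = iter r a0 x" by (rule iter_cong) (simp add: a0_def)
      ultimately have inV: "iter r a x \<in> V" unfolding V_def by auto
      have "(D s ^^ a s) (iter r a x) = 0"
        using Dpow_zero_ge[OF s nv, of "iter r a x" "a s"] N2[OF inV] k ks by simp
      moreover have "iter (Suc r) a x = divided_power sc (q s s) (D s) (a s) (iter r a x)"
        by (simp add: iter_Suc s_def)
      ultimately show ?thesis unfolding divided_power_def by simp
    qed
  qed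
qed

definition SW :: "nat list set" where "SW = {w. sorted w \<and> set w \<subseteq> {1..m}}"

abbreviation PH where "PH x \<equiv> Phi sc q D eps m x"

lemma PH_def: "PH x w = (if w \<in> SW then eps (iter m (count_list w) x) else 0)"
  unfolding Phi_def SW_def by simp

lemma PH_supp_bound: "\<exists>L. \<forall>w. PH x w \<noteq> 0 \<longrightarrow> set w \<subseteq> {1..m} \<and> length w \<le> L"
proof -
  obtain N where N: "\<And>a. (\<exists>k\<in>{1..m}. N \<le> a k) \<Longrightarrow> iter m a x = 0" using nil_bound[of m x] by auto
  have "set w \<subseteq> {1..m} \<and> length w \<le> m * N" if "PH x w \<noteq> 0" for w
  proof -
    have w: "w \<in> SW" and nz: "iter m (count_list w) x \<noteq> 0"
      using that by (auto simp: PH_def eps_zero split: if_splits)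
    have sw: "set w \<subseteq> {1..m}" using w SW_def by auto
    have "\<forall>k\<in>{1..m}. count_list w k < N"
    proof
      fix k assume k: "k \<in> {1..m}"
      show "count_list w k < N"
      proof (rule ccontr)
        assume "\<not> count_list w k < N"
        then have "iter m (count_list w) x = 0" using N[of "count_list w"] k by (meson not_less)
        then show False using nz by simp
      qed
    qed
    then have "sum (count_list w) {1..m} \<le> sum (\<lambda>_. N) {1..m}"
      by (intro sum_mono) (auto simp: less_imp_le)
    then have "length w \<le> m * N" using sum_count_set[OF sw] by simp
    then show ?thesis using sw by simp
  qed
  then show ?thesis by blast
qed

lemma PH_fin: "fin_supp (PH x)"
proof -
  obtain L where L: "\<And>w. PH x w \<noteq> 0 \<Longrightarrow> set w \<subseteq> {1..m} \<and> length w \<le> L"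
    using PH_supp_bound by blast
  have "{w. PH x w \<noteq> 0} \<subseteq> {w. set w \<subseteq> {1..m} \<and> length w \<le> L}" using L by auto
  then show ?thesis unfolding fin_supp_def
    using finite_lists_length_le[of "{1..m}" L] by (auto intro: finite_subset)
qed

lemma D_one: "k \<in> {1..m} \<Longrightarrow> D k 1 = 0"
proof -
  assume k: "k \<in> {1..m}"
  have "phi k 1 = 1" using aut[OF k] unfolding is_algebra_automorphism_def by auto
  then have "D k 1 = D k 1 + D k 1" using Dmul[OF k, of 1 1] by simp
  then show ?thesis by simp
qed

lemma dp_one: "k \<in> {1..m} \<Longrightarrow> divided_power sc (q k k) (D k) n 1 = (if n = 0 then 1 else 0)"
proof (cases n)
  case 0 then show ?thesis by (simp add: divided_power_def qfact_0)
next
  case (Suc n')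
  assume k: "k \<in> {1..m}"
  have "(D k ^^ Suc n') 1 = (D k ^^ n') (D k 1)" by (simp add: funpow_Suc_right del: funpow.simps)
  then have "(D k ^^ Suc n') 1 = 0" using D_one[OF k] lin_zero[OF lin_pow[OF linD[OF k]]] by simp
  then show ?thesis using Suc by (simp add: divided_power_def)
qed

lemma iter_one: "r \<le> m \<Longrightarrow> iter r a 1 = (if \<forall>k\<in>{1..r}. a k = 0 then 1 else 0)"
proof (induction r)
  case 0 then show ?case by (simp add: iter_0)
next
  case (Suc r)
  have s: "Suc r \<in> {1..m}" using Suc by auto
  show ?case
  proof (cases "\<forall>k\<in>{1..r}. a k = 0")
    case True
    then have "(\<forall>k\<in>{1..Suc r}. a k = 0) \<longleftrightarrow> a (Suc r) = 0" by (auto simp: le_Suc_eq)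
    then show ?thesis using Suc True dp_one[OF s] by (simp add: iter_Suc)
  next
    case False
    have i0: "iter r a 1 = 0" using Suc.IH Suc.prems False by simp
    have "\<not> (\<forall>k\<in>{1..Suc r}. a k = 0)" using False by auto
    then show ?thesis using i0 lin_zero[OF dp_lin[OF s]] by (simp add: iter_Suc)
  qed
qed

lemma PH_one: "PH 1 = fa_one"
proof
  fix w
  show "PH 1 w = fa_one w"
  proof (cases "w \<in> SW")
    case True
    then have sw: "set w \<subseteq> {1..m}" by (simp add: SW_def)
    have "(\<forall>k\<in>{1..m}. count_list w k = 0) \<longleftrightarrow> w = []"
    proof
      assume "\<forall>k\<in>{1..m}. count_list w k = 0"
      then have H: "\<forall>k\<in>{1..m}. count_list w k = 0" .
      show "w = []"
      proof (rule ccontr)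
        assume "w \<noteq> []"
        then obtain z where z: "z \<in> set w" by (cases w) auto
        then have "z \<in> {1..m}" using sw by auto
        then have "count_list w z = 0" using H by auto
        then show False using z by (simp add: count_list_0_iff)
      qed
    qed simp
    moreover have "eps 1 = 1" using eps_hom unfolding is_algebra_hom_to_field_def by auto
    ultimately show ?thesis using True by (simp add: PH_def iter_one fa_one_def eps_zero)
  next
    case False
    then have "w \<noteq> []" by (auto simp: SW_def)
    then show ?thesis using False by (simp add: PH_def fa_one_def)
  qed
qed

lemma PH_add: "PH (x + y) = fa_add (PH x) (PH y)"
  by (auto simp: fun_eq_iff fa_add_def PH_def lin_add[OF iter_lin] eps_add)

lemma PH_scale: "PH (sc c x) = fa_scale c (PH x)"
  by (auto simp: fun_eq_iff fa_scale_def PH_def lin_sc[OF iter_lin] eps_sc)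

lemma PH_nz_SW: "PH x w \<noteq> 0 \<Longrightarrow> w \<in> SW"
  by (auto simp: PH_def split: if_splits)

lemma sort_SW: "u \<in> SW \<Longrightarrow> v \<in> SW \<Longrightarrow> sort (u @ v) \<in> SW"
  unfolding SW_def by auto

lemma PH_mul_pointwise:
  assumes U: "finite U" "U \<subseteq> SW" "{w. PH x w \<noteq> 0} \<subseteq> U"
    and V: "finite V" "V \<subseteq> SW" "{w. PH y w \<noteq> 0} \<subseteq> V"
  shows "(\<Sum>u\<in>U. \<Sum>v\<in>V. PH x u * PH y v * (Qf m (count_list u) (count_list v) * fa_word (sort (u @ v)) s))
     = PH (x * y) s"
proof -
  define G where "G p = PH x (fst p) * PH y (snd p) * Qf m (count_list (fst p)) (count_list (snd p))" for p
  have "(\<Sum>u\<in>U. \<Sum>v\<in>V. PH x u * PH y v * (Qf m (count_list u) (count_list v) * fa_word (sort (u @ v)) s))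
      = (\<Sum>p\<in>U \<times> V. if sort (fst p @ snd p) = s then G p else 0)"
    unfolding sum.cartesian_product G_def fa_word_def by (rule sum.cong) auto
  also have "\<dots> = (\<Sum>p\<in>{p \<in> U \<times> V. sort (fst p @ snd p) = s}. G p)"
    using U V by (simp add: sum.inter_filter)
  finally have L: "(\<Sum>u\<in>U. \<Sum>v\<in>V. PH x u * PH y v * (Qf m (count_list u) (count_list v) * fa_word (sort (u @ v)) s))
      = (\<Sum>p\<in>{p \<in> U \<times> V. sort (fst p @ snd p) = s}. G p)" .
  show ?thesis
  proof (cases "s \<in> SW")
    case False
    have emp: "{p \<in> U \<times> V. sort (fst p @ snd p) = s} = {}"
      using False sort_SW U(2) V(2) by fastforce
    show ?thesis unfolding L emp using False by (simp add: PH_def)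
  next
    case True
    define a where "a = count_list s"
    define P where "P = {p. fst p \<in> SW \<and> snd p \<in> SW \<and> sort (fst p @ snd p) = s}"
    have cnt_sum: "p \<in> P \<Longrightarrow> count_list (fst p) k + count_list (snd p) k = a k" for p k
    proof -
      assume "p \<in> P"
      then have "s = sort (fst p @ snd p)" unfolding P_def by auto
      then show ?thesis unfolding a_def by (simp add: cnt_sort)
    qed
    have finP: "finite P"
    proof -
      have "P \<subseteq> {w. set w \<subseteq> {1..m} \<and> length w \<le> length s} \<times> {w. set w \<subseteq> {1..m} \<and> length w \<le> length s}"
      proof
        fix p assume "p \<in> P"
        then have "length (fst p @ snd p) = length s" "fst p \<in> SW" "snd p \<in> SW"
          unfolding P_def by (auto simp: length_sort[symmetric])
        then show "p \<in> {w. set w \<subseteq> {1..m} \<and> length w \<le> length s} \<times> {w. set w \<subseteq> {1..m} \<and> length w \<le> length s}"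
          unfolding SW_def by (cases p) auto
      qed
      then show ?thesis using finite_lists_length_le[of "{1..m}"] by (auto intro: finite_subset)
    qed
    have "(\<Sum>p\<in>{p \<in> U \<times> V. sort (fst p @ snd p) = s}. G p) = (\<Sum>p\<in>P. G p)"
    proof (rule sum.mono_neutral_left[OF finP])
      show "{p \<in> U \<times> V. sort (fst p @ snd p) = s} \<subseteq> P" using U(2) V(2) unfolding P_def by auto
      show "\<forall>p\<in>P - {p \<in> U \<times> V. sort (fst p @ snd p) = s}. G p = 0"
      proof
        fix p assume "p \<in> P - {p \<in> U \<times> V. sort (fst p @ snd p) = s}"
        then have "fst p \<notin> U \<or> snd p \<notin> V" unfolding P_def by (cases p) auto
        then have "PH x (fst p) = 0 \<or> PH y (snd p) = 0" using U(3) V(3) by auto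
        then show "G p = 0" unfolding G_def by auto
      qed
    qed
    also have "(\<Sum>p\<in>P. G p) = (\<Sum>j\<in>J m a. Qf m (\<lambda>k. a k - j k) j * eps (iter m (\<lambda>k. a k - j k) x) * eps (iter m j y))"
    proof (rule sum.reindex_bij_witness[where j = "\<lambda>p. count_list (snd p)" and i = "\<lambda>j. (wo m (\<lambda>k. a k - j k), wo m j)"])
      fix p assume p: "p \<in> P"
      then have u: "fst p \<in> SW" and v: "snd p \<in> SW" unfolding P_def by auto
      have cu: "(\<lambda>k. a k - count_list (snd p) k) = count_list (fst p)"
        by (intro ext) (simp add: cnt_sum[OF p, symmetric])
      show "(wo m (\<lambda>k. a k - count_list (snd p) k), wo m (count_list (snd p))) = p"
        unfolding cu using u v wo_of_sorted by (cases p) (auto simp: SW_def)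
      show "count_list (snd p) \<in> J m a"
        unfolding J_def
      proof (intro CollectI allI conjI impI)
        fix k show "count_list (snd p) k \<le> a k" using cnt_sum[OF p, of k] by linarith
      next
        fix k assume "k \<notin> {1..m}"
        then have "k \<notin> set (snd p)" using v by (auto simp: SW_def)
        then show "count_list (snd p) k = 0" by simp
      qed
      show "Qf m (\<lambda>k. a k - count_list (snd p) k) (count_list (snd p)) *
          eps (iter m (\<lambda>k. a k - count_list (snd p) k) x) * eps (iter m (count_list (snd p)) y) = G p"
        unfolding cu G_def using u v by (simp add: PH_def mult.commute mult.left_commute)
    next
      fix j assume j: "j \<in> J m a"
      show "count_list (snd (wo m (\<lambda>k. a k - j k), wo m j)) = j"
        using j unfolding J_def by (auto simp: fun_eq_iff wo_cnt)
      have sa: "set s \<subseteq> {1..m}" "sorted s" using True SW_def by auto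
      have "sort (wo m (\<lambda>k. a k - j k) @ wo m j) = s"
      proof (rule properties_for_sort)
        show "mset s = mset (wo m (\<lambda>k. a k - j k) @ wo m j)"
        proof (rule mset_eq_cnt)
          fix k
          show "count_list s k = count_list (wo m (\<lambda>k. a k - j k) @ wo m j) k"
          proof (cases "k \<in> {1..m}")
            case True then show ?thesis using j unfolding J_def a_def by (auto simp: wo_cnt)
          next
            case False then have "k \<notin> set s" using sa by auto
            moreover have "count_list (wo m c) k = 0" for c using False by (simp only: wo_cnt if_False)
            ultimately show ?thesis by simp
          qed
        qed
        show "sorted s" by (rule sa)
      qed
      then show "(wo m (\<lambda>k. a k - j k), wo m j) \<in> P"
        unfolding P_def SW_def using wo_set wo_sorted by auto
    qed
    also have "\<dots> = PH (x * y) s" using True by (simp add: PH_def leibniz_eps a_def)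
    finally show ?thesis using L by simp
  qed
qed

lemma PH_mul: "qeq q m (PH (x * y)) (fa_mul (PH x) (PH y))"
proof -
  define U where "U = {w. PH x w \<noteq> 0}"
  define V where "V = {w. PH y w \<noteq> 0}"
  have U: "finite U" "U \<subseteq> SW" "{w. PH x w \<noteq> 0} \<subseteq> U"
    using PH_fin[of x] PH_nz_SW unfolding U_def fin_supp_def by auto
  have V: "finite V" "V \<subseteq> SW" "{w. PH y w \<noteq> 0} \<subseteq> V"
    using PH_fin[of y] PH_nz_SW unfolding V_def fin_supp_def by auto
  have E1: "fa_mul (PH x) (PH y) = (\<lambda>w. \<Sum>u\<in>U. \<Sum>v\<in>V. PH x u * PH y v * fa_word (u @ v) w)"
    by (rule fa_mul_expand[OF U(1,3) V(1,3)])
  have E2: "qeq q m (\<lambda>w. \<Sum>u\<in>U. \<Sum>v\<in>V. PH x u * PH y v * fa_word (u @ v) w)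
     (\<lambda>w. \<Sum>u\<in>U. \<Sum>v\<in>V. PH x u * PH y v * (Qf m (count_list u) (count_list v) * fa_word (sort (u @ v)) w))"
  proof (rule qeq_sum)
    fix u assume u: "u \<in> U"
    show "qeq q m (\<lambda>w. \<Sum>v\<in>V. PH x u * PH y v * fa_word (u @ v) w)
       (\<lambda>w. \<Sum>v\<in>V. PH x u * PH y v * (Qf m (count_list u) (count_list v) * fa_word (sort (u @ v)) w))"
    proof (rule qeq_sum)
      fix v assume v: "v \<in> V"
      have "u \<in> SW" "v \<in> SW" using u v U V by auto
      then have "qeq q m (fa_word (u @ v)) (\<lambda>w. Qf m (count_list u) (count_list v) * fa_word (sort (u @ v)) w)"
        unfolding SW_def by (intro nf) auto
      then show "qeq q m (\<lambda>w. PH x u * PH y v * fa_word (u @ v) w)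
          (\<lambda>w. PH x u * PH y v * (Qf m (count_list u) (count_list v) * fa_word (sort (u @ v)) w))"
        by (rule qeq_scale)
    qed
  qed
  have E3: "(\<lambda>w. \<Sum>u\<in>U. \<Sum>v\<in>V. PH x u * PH y v * (Qf m (count_list u) (count_list v) * fa_word (sort (u @ v)) w))
      = PH (x * y)"
    using PH_mul_pointwise[OF U V] by (simp add: fun_eq_iff)
  show ?thesis using E1 E2 E3 by (metis qeq_sym)
qed

end

theorem mainTheorem13:
  fixes sc :: "'k::field \<Rightarrow> 'a::ring_1_no_zero_divisors \<Rightarrow> 'a"
    and m :: nat
    and phi D :: "nat \<Rightarrow> 'a \<Rightarrow> 'a"
    and q :: "nat \<Rightarrow> nat \<Rightarrow> 'k"
    and eps :: "'a \<Rightarrow> 'k"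
  assumes alg: "is_algebra sc"
    and aut: "\<And>k. k \<in> {1..m} \<Longrightarrow> is_algebra_automorphism sc (phi k)"
    and der: "\<And>k. k \<in> {1..m} \<Longrightarrow> is_skew_derivation sc (phi k) (D k)"
    and lnil: "\<And>k. k \<in> {1..m} \<Longrightarrow> locally_nilpotent (D k)"
    and comm: "\<And>k l x. k \<in> {1..m} \<Longrightarrow> l \<in> {1..m} \<Longrightarrow>
                 D l (phi k x) = sc (q k l) (phi k (D l x))"
    and qunit: "\<And>k l. k \<in> {1..m} \<Longrightarrow> l \<in> {1..m} \<Longrightarrow> q k l \<noteq> 0"
    and qroot: "\<And>k n. k \<in> {1..m} \<Longrightarrow> n > 0 \<Longrightarrow> q k k ^ n \<noteq> 1"
    and eps_hom: "is_algebra_hom_to_field sc eps"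
    and eps_phi: "\<And>k x. k \<in> {1..m} \<Longrightarrow> eps (phi k x) = eps x"
  shows "(\<forall>x. fin_supp (Phi sc q D eps m x))
       \<and> qeq q m (Phi sc q D eps m 1) fa_one
       \<and> (\<forall>x y. qeq q m (Phi sc q D eps m (x + y)) (fa_add (Phi sc q D eps m x) (Phi sc q D eps m y)))
       \<and> (\<forall>c x. qeq q m (Phi sc q D eps m (sc c x)) (fa_scale c (Phi sc q D eps m x)))
       \<and> (\<forall>x y. qeq q m (Phi sc q D eps m (x * y)) (fa_mul (Phi sc q D eps m x) (Phi sc q D eps m y)))"
proof -
  interpret qsetup sc m phi D q eps
    by (unfold_locales) (use assms in auto)
  show ?thesis by (simp add: PH_fin PH_one PH_add PH_scale PH_mul qeq_refl)
qed

end
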